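(* Let $U=\ln Z_2-H_S(\underline\theta)$ and $T=Z_1/Z_2\in(0,1]$, and let $\mu=\max\{\theta_1,\theta_2\}/\min\{\theta_1,\theta_2\}\ge1$. For every $t\in(0,1]$, the conditional density of $U$ given $T=t$ is $$f_{1,\underline\theta}(u\mid t)=\frac{\mu^{-\alpha}e^{2\alpha u}e^{-(1+t/\mu)e^{u}}+\mu^{\alpha}e^{2\alpha u}e^{-(1+t\mu)e^{u}}}{\Gamma(2\alpha)\left[\dfrac{1}{\mu^{\alpha}(1+t/\mu)^{2\alpha}}+\dfrac{\mu^{\alpha}}{(1+t\mu)^{2\alpha}}\right]},\qquad -\infty<u<\infty.$$
   Context: Fix a known $\alpha>0$. $X_1,X_2$ are independent, $X_i$ having density $f(x\mid\theta_i)=\frac{x^{\alpha-1}e^{-x/\theta_i}}{\Gamma(\alpha)\theta_i^{\alpha}}$, $x>0$, with unknown $\underline\theta=(\theta_1,\theta_2)\in(0,\infty)^2$. $Z_1=\min\{X_1,X_2\}$, $Z_2=\max\{X_1,X_2\}$. $H_S(\underline\theta)=\ln\theta_1\, I(X_1\ge X_2)+\ln\theta_2\, I(X_1<X_2)$. *)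

theory Defs
  imports "HOL-Probability.Probability"
begin

definition gamma_dens :: "real \<Rightarrow> real \<Rightarrow> real \<Rightarrow> real" where
  "gamma_dens \<alpha> \<theta> x =
     (if 0 < x then x powr (\<alpha> - 1) * exp (- x / \<theta>) / (Gamma \<alpha> * \<theta> powr \<alpha>) else 0)"

definition cond_dens :: "real \<Rightarrow> real \<Rightarrow> real \<Rightarrow> real \<Rightarrow> real" where
  "cond_dens \<alpha> \<mu> t u =
     (\<mu> powr (-\<alpha>) * exp (2 * \<alpha> * u) * exp (- (1 + t / \<mu>) * exp u)
      + \<mu> powr \<alpha> * exp (2 * \<alpha> * u) * exp (- (1 + t * \<mu>) * exp u))
     / (Gamma (2 * \<alpha>) *
        (1 / (\<mu> powr \<alpha> * (1 + t / \<mu>) powr (2 * \<alpha>)) + \<mu> powr \<alpha> / (1 + t * \<mu>) powr (2 * \<alpha>)))"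

end

theory Submission
  imports Defs
begin

lemma SUP_indicator_incseq:
  assumes "incseq S"
  shows "(SUP n. indicator (S n) x :: ennreal) = indicator (\<Union>n. S n) x"
proof (cases "x \<in> (\<Union>n. S n)")
  case True
  then obtain n where n: "x \<in> S n" by auto
  have "(SUP n. indicator (S n) x :: ennreal) = 1"
  proof (rule antisym)
    show "(SUP n. indicator (S n) x :: ennreal) \<le> 1"
      by (rule SUP_least) (auto split: split_indicator)
    show "1 \<le> (SUP n. indicator (S n) x :: ennreal)"
      using n by (intro SUP_upper2[of n]) auto
  qed
  with True show ?thesis by simp
next
  case False then show ?thesis by simp
qed

lemma exp_subst:
  fixes F :: "real \<Rightarrow> ennreal"
  assumes [measurable]: "F \<in> borel_measurable borel"
  shows "(\<integral>\<^sup>+u. F (exp u) * ennreal (exp u) \<partial>lborel) = (\<integral>\<^sup>+x. indicator {0<..} x * F x \<partial>lborel)"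
proof -
  define S where "S n = {exp (- real n - 1) .. exp (real n + 1)}" for n
  define R where "R n = {- real n - 1 .. real n + 1}" for n
  have incS: "incseq S" unfolding S_def incseq_def by auto
  have incR: "incseq R" unfolding R_def incseq_def by auto
  have US: "(\<Union>n. S n) = {0<..}"
  proof safe
    fix x :: real and n :: nat assume "x \<in> S n"
    hence "exp (- real n - 1) \<le> x" unfolding S_def by simp
    moreover have "0 < exp (- real n - 1)" by simp
    ultimately have "0 < x" by linarith
    thus "0 < x" .
  next
    fix x :: real assume x: "0 < x"
    obtain n :: nat where "\<bar>ln x\<bar> \<le> real n" using real_arch_simple by blast
    hence a: "- real n - 1 \<le> ln x" "ln x \<le> real n + 1" by auto
    have "exp (- real n - 1) \<le> exp (ln x)" "exp (ln x) \<le> exp (real n + 1)"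
      using a by (simp_all only: exp_le_cancel_iff)
    hence "x \<in> S n" unfolding S_def using x by simp
    then show "x \<in> (\<Union>n. S n)" by auto
  qed
  have UR: "(\<Union>n. R n) = UNIV"
  proof safe
    fix x :: real
    obtain n :: nat where "\<bar>x\<bar> \<le> real n" using real_arch_simple by blast
    hence "x \<in> R n" unfolding R_def by auto
    then show "x \<in> (\<Union>n. R n)" by auto
  qed auto
  have eq: "(\<integral>\<^sup>+x. F x * indicator (S n) x \<partial>lborel) = (\<integral>\<^sup>+u. F (exp u) * ennreal (exp u) * indicator (R n) u \<partial>lborel)" for n
    unfolding S_def R_def
    by (rule nn_integral_substitution_aux) (auto intro!: continuous_intros derivative_eq_intros)
  have "(\<integral>\<^sup>+x. indicator {0<..} x * F x \<partial>lborel) = (\<integral>\<^sup>+x. (SUP n. F x * indicator (S n) x) \<partial>lborel)"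
    by (intro nn_integral_cong) (simp add: SUP_mult_left_ennreal[symmetric] SUP_indicator_incseq[OF incS] US mult.commute)
  also have "\<dots> = (SUP n. \<integral>\<^sup>+x. F x * indicator (S n) x \<partial>lborel)"
    by (rule nn_integral_monotone_convergence_SUP)
       (use incS in \<open>auto simp: incseq_def le_fun_def intro!: mult_left_mono split: split_indicator\<close>, simp add: S_def)
  also have "\<dots> = (SUP n. \<integral>\<^sup>+u. F (exp u) * ennreal (exp u) * indicator (R n) u \<partial>lborel)"
    by (simp add: eq)
  also have "\<dots> = (\<integral>\<^sup>+u. (SUP n. F (exp u) * ennreal (exp u) * indicator (R n) u) \<partial>lborel)"
    by (rule nn_integral_monotone_convergence_SUP[symmetric])
       (use incR in \<open>auto simp: incseq_def le_fun_def intro!: mult_left_mono split: split_indicator\<close>, simp add: R_def)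
  also have "\<dots> = (\<integral>\<^sup>+u. F (exp u) * ennreal (exp u) \<partial>lborel)"
    by (intro nn_integral_cong) (simp add: SUP_mult_left_ennreal[symmetric] SUP_indicator_incseq[OF incR] UR)
  finally show ?thesis ..
qed

lemma exp_subst_scaled:
  fixes F :: "real \<Rightarrow> ennreal" and a :: real
  assumes [measurable]: "F \<in> borel_measurable borel" and a: "a > 0"
  shows "(\<integral>\<^sup>+u. F (a * exp u) * ennreal (a * exp u) \<partial>lborel) = (\<integral>\<^sup>+x. indicator {0<..} x * F x \<partial>lborel)"
proof -
  have "(\<integral>\<^sup>+x. indicator {0<..} x * F x \<partial>lborel) = (\<integral>\<^sup>+v. F (exp v) * ennreal (exp v) \<partial>lborel)"
    by (rule exp_subst[symmetric]) simp
  also have "\<dots> = ennreal \<bar>1::real\<bar> * (\<integral>\<^sup>+u. F (exp (ln a + 1 * u)) * ennreal (exp (ln a + 1 * u)) \<partial>lborel)"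
    by (rule nn_integral_real_affine) auto
  also have "\<dots> = (\<integral>\<^sup>+u. F (a * exp u) * ennreal (a * exp u) \<partial>lborel)"
    using a by (simp add: exp_add)
  finally show ?thesis ..
qed

lemma gamma_rate:
  fixes c s :: real
  assumes c: "c > 0" and s: "s > 0"
  shows "(\<integral>\<^sup>+x. indicator {0<..} x * ennreal (x powr (s - 1) * exp (- c * x)) \<partial>lborel)
         = ennreal (Gamma s / c powr s)"
proof -
  define I where "I = (\<integral>\<^sup>+x. indicator {0<..} x * ennreal (x powr (s - 1) * exp (- c * x)) \<partial>lborel)"
  have "ennreal (Gamma s) = (\<integral>\<^sup>+y. ennreal (indicator {0..} y * y powr (s - 1) / exp y) \<partial>lborel)"
    using Gamma_conv_nn_integral_real[OF s] by simp
  also have "\<dots> = \<bar>c\<bar> * (\<integral>\<^sup>+x. ennreal (indicator {0..} (0 + c * x) * (0 + c * x) powr (s - 1) / exp (0 + c * x)) \<partial>lborel)"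
    using c by (intro nn_integral_real_affine) auto
  also have "(\<integral>\<^sup>+x. ennreal (indicator {0..} (0 + c * x) * (0 + c * x) powr (s - 1) / exp (0 + c * x)) \<partial>lborel)
      = (\<integral>\<^sup>+x. ennreal (c powr (s - 1)) * (indicator {0<..} x * ennreal (x powr (s - 1) * exp (- c * x))) \<partial>lborel)"
  proof (intro nn_integral_cong)
    fix x :: real
    show "ennreal (indicator {0..} (0 + c * x) * (0 + c * x) powr (s - 1) / exp (0 + c * x))
      = ennreal (c powr (s - 1)) * (indicator {0<..} x * ennreal (x powr (s - 1) * exp (- c * x)))"
    proof (cases "x > 0")
      case True
      then show ?thesis using c
        by (simp add: powr_mult ennreal_mult'[symmetric] exp_minus field_simps)
    next
      case False
      then show ?thesis using c by (auto simp: indicator_def zero_le_mult_iff)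
    qed
  qed
  also have "\<dots> = ennreal (c powr (s - 1)) * I"
    unfolding I_def by (rule nn_integral_cmult) simp
  finally have eq0: "ennreal (Gamma s) = ennreal c * (ennreal (c powr (s - 1)) * I)"
    using c by simp
  have cs: "c powr s = c * c powr (s - 1)"
    using c powr_add[of c 1 "s - 1"] by simp
  have eq: "ennreal (Gamma s) = ennreal (c powr s) * I"
    unfolding eq0 cs using c by (simp add: ennreal_mult mult.assoc)
  have "I = ennreal (1 / c powr s) * (ennreal (c powr s) * I)"
    using c by (simp add: mult.assoc[symmetric] ennreal_mult'[symmetric])
  also have "\<dots> = ennreal (Gamma s / c powr s)"
    using c s by (simp add: eq[symmetric] ennreal_mult'[symmetric] Gamma_real_pos)
  finally show ?thesis unfolding I_def .
qed

lemma dexp_integral: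
  fixes a c :: real
  assumes a: "a > 0" and c: "c > 0"
  shows "(\<integral>\<^sup>+u. ennreal (exp (2 * a * u) * exp (- c * exp u)) \<partial>lborel) = ennreal (Gamma (2 * a) / c powr (2 * a))"
proof -
  have "(\<integral>\<^sup>+u. ennreal (exp (2 * a * u) * exp (- c * exp u)) \<partial>lborel)
     = (\<integral>\<^sup>+u. ennreal (exp u powr (2 * a - 1) * exp (- c * exp u)) * ennreal (exp u) \<partial>lborel)"
  proof (intro nn_integral_cong)
    fix u :: real
    have "exp u powr (2 * a - 1) * exp u = exp (2 * a * u)"
      by (simp add: powr_def exp_add[symmetric] algebra_simps)
    then show "ennreal (exp (2 * a * u) * exp (- c * exp u)) = ennreal (exp u powr (2 * a - 1) * exp (- c * exp u)) * ennreal (exp u)"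
      by (simp add: ennreal_mult'[symmetric] mult_ac)
  qed
  also have "\<dots> = (\<integral>\<^sup>+x. indicator {0<..} x * ennreal (x powr (2 * a - 1) * exp (- c * x)) \<partial>lborel)"
    by (rule exp_subst[where F = "\<lambda>x. ennreal (x powr (2 * a - 1) * exp (- c * x))"]) simp
  also have "\<dots> = ennreal (Gamma (2 * a) / c powr (2 * a))"
    using a c by (intro gamma_rate) auto
  finally show ?thesis .
qed

lemma cond_dens_part1:
  fixes \<alpha> \<mu> t :: real
  assumes a: "\<alpha> > 0" and m: "\<mu> > 0" and t: "t > 0"
  shows "(\<forall>u. cond_dens \<alpha> \<mu> t u \<ge> 0) \<and> (\<integral>\<^sup>+ u. ennreal (cond_dens \<alpha> \<mu> t u) \<partial>lborel) = 1"
proof -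
  define c1 where "c1 = 1 + t / \<mu>"
  define c2 where "c2 = 1 + t * \<mu>"
  have c1: "c1 > 0" and c2: "c2 > 0" using m t by (auto simp: c1_def c2_def intro!: add_pos_pos)
  define Q where "Q = Gamma (2 * \<alpha>) * (1 / (\<mu> powr \<alpha> * c1 powr (2 * \<alpha>)) + \<mu> powr \<alpha> / c2 powr (2 * \<alpha>))"
  have G: "Gamma (2 * \<alpha>) > 0" using a by (simp add: Gamma_real_pos)
  have Q: "Q > 0" unfolding Q_def using G c1 c2 m by (intro mult_pos_pos add_pos_pos) auto
  define E where "E c u = exp (2 * \<alpha> * u) * exp (- c * exp u)" for c u
  have cd: "cond_dens \<alpha> \<mu> t u = (\<mu> powr (-\<alpha>) / Q) * E c1 u + (\<mu> powr \<alpha> / Q) * E c2 u" for u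
    unfolding cond_dens_def Q_def E_def c1_def c2_def by (simp add: add_divide_distrib)
  have nn: "cond_dens \<alpha> \<mu> t u \<ge> 0" for u
    unfolding cd E_def using Q by (intro add_nonneg_nonneg mult_nonneg_nonneg) auto
  have "(\<integral>\<^sup>+ u. ennreal (cond_dens \<alpha> \<mu> t u) \<partial>lborel)
     = (\<integral>\<^sup>+ u. ennreal (\<mu> powr (-\<alpha>) / Q) * ennreal (E c1 u) + ennreal (\<mu> powr \<alpha> / Q) * ennreal (E c2 u) \<partial>lborel)"
    unfolding cd E_def using Q
    by (intro nn_integral_cong) (simp add: ennreal_plus[symmetric] ennreal_mult'[symmetric] del: ennreal_plus)
  also have "\<dots> = ennreal (\<mu> powr (-\<alpha>) / Q) * (\<integral>\<^sup>+ u. ennreal (E c1 u) \<partial>lborel) + ennreal (\<mu> powr \<alpha> / Q) * (\<integral>\<^sup>+ u. ennreal (E c2 u) \<partial>lborel)"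
    by (subst nn_integral_add) (auto simp: E_def nn_integral_cmult)
  also have "\<dots> = ennreal (\<mu> powr (-\<alpha>) / Q * (Gamma (2 * \<alpha>) / c1 powr (2 * \<alpha>)) + \<mu> powr \<alpha> / Q * (Gamma (2 * \<alpha>) / c2 powr (2 * \<alpha>)))"
    unfolding E_def using a c1 c2 Q G dexp_integral[OF a c1] dexp_integral[OF a c2]
    by (simp add: ennreal_mult'[symmetric] ennreal_plus[symmetric] del: ennreal_plus)
  also have "\<mu> powr (-\<alpha>) / Q * (Gamma (2 * \<alpha>) / c1 powr (2 * \<alpha>)) + \<mu> powr \<alpha> / Q * (Gamma (2 * \<alpha>) / c2 powr (2 * \<alpha>)) = 1"
  proof -
    have "\<mu> powr (-\<alpha>) / Q * (Gamma (2 * \<alpha>) / c1 powr (2 * \<alpha>)) + \<mu> powr \<alpha> / Q * (Gamma (2 * \<alpha>) / c2 powr (2 * \<alpha>))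
       = (Gamma (2 * \<alpha>) * (1 / (\<mu> powr \<alpha> * c1 powr (2 * \<alpha>)) + \<mu> powr \<alpha> / c2 powr (2 * \<alpha>))) / Q"
      by (simp add: powr_minus divide_simps algebra_simps)
    also have "\<dots> = 1" using Q unfolding Q_def[symmetric] by simp
    finally show ?thesis .
  qed
  finally show ?thesis using nn by simp
qed

definition qd :: "real \<Rightarrow> real \<Rightarrow> real \<Rightarrow> real \<Rightarrow> real \<Rightarrow> real" where
  "qd \<alpha> a b t u = t powr (\<alpha> - 1) / (Gamma \<alpha>)\<^sup>2 * (a / b) powr \<alpha> * exp (2 * \<alpha> * u) * exp (- (1 + t * a / b) * exp u)"

lemma qd_identity:
  fixes \<alpha> a b t u x :: real
  assumes a: "a > 0" and b: "b > 0" and t: "t > 0" and x: "x = a * exp u"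
  shows "gamma_dens \<alpha> a x * x * gamma_dens \<alpha> b (x * t) * x = qd \<alpha> a b t u"
proof -
  have xp: "x > 0" using x a by simp
  have lx: "ln x = ln a + u" using x a by (simp add: ln_mult)
  have lxt: "ln (x * t) = ln a + u + ln t" using xp t lx by (simp add: ln_mult)
  have e1: "exp (- x / a) = exp (- exp u)" using x a by simp
  have e2: "exp (- (x * t) / b) = exp (- (t * a / b) * exp u)" using x by (simp add: field_simps)
  have xa: "x / a = exp u" using x a by simp
  have px: "x powr (\<alpha> - 1) = exp ((\<alpha> - 1) * (ln a + u))" using xp by (simp add: powr_def lx)
  have pt: "(x * t) powr (\<alpha> - 1) = exp ((\<alpha> - 1) * (ln a + u + ln t))" using xp t by (simp add: powr_def lxt)
  have pa: "a powr \<alpha> = exp (\<alpha> * ln a)" using a by (simp add: powr_def)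
  have pb: "b powr \<alpha> = exp (\<alpha> * ln b)" using b by (simp add: powr_def)
  have e1': "exp (- x / a) = exp (- exp u)" using xa by (simp add: minus_divide_left[symmetric])
  have g1: "gamma_dens \<alpha> a x = exp ((\<alpha> - 1) * (ln a + u)) * exp (- exp u) / (Gamma \<alpha> * exp (\<alpha> * ln a))"
    unfolding gamma_dens_def using xp by (simp only: if_True px pa e1')
  have g2: "gamma_dens \<alpha> b (x * t) = exp ((\<alpha> - 1) * (ln a + u + ln t)) * exp (- (t * a / b) * exp u) / (Gamma \<alpha> * exp (\<alpha> * ln b))"
  proof -
    have "0 < x * t" using xp t by simp
    then show ?thesis unfolding gamma_dens_def by (simp only: if_True pt pb e2)
  qed
  have xe: "x = exp (ln a + u)" using lx xp by (metis exp_ln)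
  have "gamma_dens \<alpha> a x * x * gamma_dens \<alpha> b (x * t) * x
     = (exp ((\<alpha> - 1) * (ln a + u)) * exp (ln a + u) * exp ((\<alpha> - 1) * (ln a + u + ln t)) * exp (ln a + u)
        / (exp (\<alpha> * ln a) * exp (\<alpha> * ln b))) * (exp (- exp u) * exp (- (t * a / b) * exp u)) / (Gamma \<alpha>)\<^sup>2"
    unfolding g1 g2 by (subst (1 2) xe) (simp add: power2_eq_square mult_ac)
  also have "exp ((\<alpha> - 1) * (ln a + u)) * exp (ln a + u) * exp ((\<alpha> - 1) * (ln a + u + ln t)) * exp (ln a + u)
        / (exp (\<alpha> * ln a) * exp (\<alpha> * ln b))
     = exp ((\<alpha> - 1) * ln t) * exp (\<alpha> * (ln a - ln b)) * exp (2 * \<alpha> * u)"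
    by (simp add: exp_add[symmetric] exp_diff[symmetric] algebra_simps)
  also have "exp (- exp u) * exp (- (t * a / b) * exp u) = exp (- (1 + t * a / b) * exp u)"
    by (simp add: exp_add[symmetric] algebra_simps)
  finally show ?thesis
    unfolding qd_def using a b t by (simp add: powr_def ln_div field_simps)
qed

lemma gamma_dens_nonneg: "\<alpha> > 0 \<Longrightarrow> \<theta> > 0 \<Longrightarrow> gamma_dens \<alpha> \<theta> x \<ge> 0"
  unfolding gamma_dens_def by (auto intro!: divide_nonneg_pos mult_pos_pos Gamma_real_pos)

lemma gamma_dens_measurable[measurable]: "gamma_dens \<alpha> \<theta> \<in> borel_measurable borel"
  unfolding gamma_dens_def by measurable

lemma region:
  fixes H :: "real \<Rightarrow> real \<Rightarrow> ennreal" and \<alpha> a b :: real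
  assumes \<alpha>: "\<alpha> > 0" and a: "a > 0" and b: "b > 0" and S[measurable]: "S \<in> sets borel"
    and H[measurable]: "case_prod H \<in> borel_measurable (borel \<Otimes>\<^sub>M borel)"
  shows "(\<integral>\<^sup>+x. \<integral>\<^sup>+y. ennreal (gamma_dens \<alpha> a x) * ennreal (gamma_dens \<alpha> b y) * indicator S (y / x) * H (ln x - ln a) (y / x) \<partial>lborel \<partial>lborel)
     = (\<integral>\<^sup>+t. indicator S t * indicator {0<..} t * (\<integral>\<^sup>+u. H u t * ennreal (qd \<alpha> a b t u) \<partial>lborel) \<partial>lborel)"
proof -
  define \<Psi> where "\<Psi> x t = ennreal (gamma_dens \<alpha> a x) * ennreal x * ennreal (gamma_dens \<alpha> b (x * t)) * indicator S t * H (ln x - ln a) t" for x t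
  have step1: "(\<integral>\<^sup>+y. ennreal (gamma_dens \<alpha> a x) * ennreal (gamma_dens \<alpha> b y) * indicator S (y / x) * H (ln x - ln a) (y / x) \<partial>lborel) = (\<integral>\<^sup>+t. \<Psi> x t \<partial>lborel)" for x
  proof (cases "x > 0")
    case True
    have "(\<integral>\<^sup>+y. ennreal (gamma_dens \<alpha> a x) * ennreal (gamma_dens \<alpha> b y) * indicator S (y / x) * H (ln x - ln a) (y / x) \<partial>lborel)
       = ennreal \<bar>x\<bar> * (\<integral>\<^sup>+t. ennreal (gamma_dens \<alpha> a x) * ennreal (gamma_dens \<alpha> b (0 + x * t)) * indicator S ((0 + x * t) / x) * H (ln x - ln a) ((0 + x * t) / x) \<partial>lborel)"
      using True by (intro nn_integral_real_affine) auto
    also have "\<dots> = (\<integral>\<^sup>+t. ennreal x * (ennreal (gamma_dens \<alpha> a x) * ennreal (gamma_dens \<alpha> b (x * t)) * indicator S t * H (ln x - ln a) t) \<partial>lborel)"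
      using True by (subst nn_integral_cmult) auto
    also have "\<dots> = (\<integral>\<^sup>+t. \<Psi> x t \<partial>lborel)"
      unfolding \<Psi>_def by (simp add: mult_ac)
    finally show ?thesis .
  next
    case False
    then show ?thesis by (simp add: \<Psi>_def gamma_dens_def)
  qed
  have Fub: "(\<integral>\<^sup>+x. \<integral>\<^sup>+t. \<Psi> x t \<partial>lborel \<partial>lborel) = (\<integral>\<^sup>+t. \<integral>\<^sup>+x. \<Psi> x t \<partial>lborel \<partial>lborel)"
    by (rule lborel_pair.Fubini'[symmetric]) (simp add: \<Psi>_def)
  have step3: "(\<integral>\<^sup>+x. \<Psi> x t \<partial>lborel) = indicator S t * indicator {0<..} t * (\<integral>\<^sup>+u. H u t * ennreal (qd \<alpha> a b t u) \<partial>lborel)" for t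
  proof -
    have "(\<integral>\<^sup>+x. \<Psi> x t \<partial>lborel) = (\<integral>\<^sup>+x. indicator {0<..} x * \<Psi> x t \<partial>lborel)"
      by (intro nn_integral_cong) (auto simp: \<Psi>_def gamma_dens_def indicator_def)
    also have "\<dots> = (\<integral>\<^sup>+u. \<Psi> (a * exp u) t * ennreal (a * exp u) \<partial>lborel)"
      using a by (intro exp_subst_scaled[symmetric]) (simp add: \<Psi>_def)
    also have "\<dots> = (\<integral>\<^sup>+u. (indicator S t * indicator {0<..} t) * (H u t * ennreal (qd \<alpha> a b t u)) \<partial>lborel)"
    proof (intro nn_integral_cong)
      fix u :: real
      define x where "x = a * exp u"
      have xp: "x > 0" using a by (simp add: x_def)
      have lx: "ln x - ln a = u" using a by (simp add: x_def ln_mult)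
      show "\<Psi> (a * exp u) t * ennreal (a * exp u) = (indicator S t * indicator {0<..} t) * (H u t * ennreal (qd \<alpha> a b t u))"
      proof (cases "t > 0")
        case True
        have "\<Psi> x t * ennreal x = indicator S t * H u t * ennreal (gamma_dens \<alpha> a x * x * gamma_dens \<alpha> b (x * t) * x)"
          unfolding \<Psi>_def lx using xp True gamma_dens_nonneg[OF \<alpha> a] gamma_dens_nonneg[OF \<alpha> b]
          by (simp add: ennreal_mult mult_ac)
        also have "gamma_dens \<alpha> a x * x * gamma_dens \<alpha> b (x * t) * x = qd \<alpha> a b t u"
          by (rule qd_identity[OF a b True x_def])
        finally show ?thesis using True by (simp add: x_def mult_ac)
      next
        case False
        then have "x * t \<le> 0" using xp by (simp add: mult_nonneg_nonpos)
        then show ?thesis using False by (simp add: \<Psi>_def gamma_dens_def x_def)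
      qed
    qed
    also have "\<dots> = indicator S t * indicator {0<..} t * (\<integral>\<^sup>+u. H u t * ennreal (qd \<alpha> a b t u) \<partial>lborel)"
      by (rule nn_integral_cmult) (simp add: qd_def)
    finally show ?thesis .
  qed
  show ?thesis using step1 Fub step3 by simp
qed

lemma qd_nonneg: "t > 0 \<Longrightarrow> a > 0 \<Longrightarrow> b > 0 \<Longrightarrow> qd \<alpha> a b t u \<ge> 0"
  unfolding qd_def by simp

lemma qd_measurable[measurable]: "(\<lambda>(t, u). qd \<alpha> a b t u) \<in> borel_measurable (borel \<Otimes>\<^sub>M borel)"
  unfolding qd_def by measurable

definition Uf :: "real \<Rightarrow> real \<Rightarrow> real \<Rightarrow> real \<Rightarrow> real" where
  "Uf \<theta>1 \<theta>2 x y = ln (max x y) - (if x \<ge> y then ln \<theta>1 else ln \<theta>2)"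
definition Tf :: "real \<Rightarrow> real \<Rightarrow> real" where
  "Tf x y = min x y / max x y"

lemma Uf_measurable[measurable]: "(\<lambda>(x, y). Uf \<theta>1 \<theta>2 x y) \<in> borel_measurable (borel \<Otimes>\<^sub>M borel)"
  unfolding Uf_def by measurable
lemma Tf_measurable[measurable]: "(\<lambda>(x, y). Tf x y) \<in> borel_measurable (borel \<Otimes>\<^sub>M borel)"
  unfolding Tf_def by measurable

lemma total:
  fixes H :: "real \<Rightarrow> real \<Rightarrow> ennreal" and \<alpha> \<theta>1 \<theta>2 :: real
  assumes \<alpha>: "\<alpha> > 0" and a: "\<theta>1 > 0" and b: "\<theta>2 > 0"
    and H[measurable]: "case_prod H \<in> borel_measurable (borel \<Otimes>\<^sub>M borel)"
  shows "(\<integral>\<^sup>+z. (\<lambda>(x, y). ennreal (gamma_dens \<alpha> \<theta>1 x) * ennreal (gamma_dens \<alpha> \<theta>2 y)) z * H (case_prod (Uf \<theta>1 \<theta>2) z) (case_prod Tf z) \<partial>(lborel \<Otimes>\<^sub>M lborel))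
     = (\<integral>\<^sup>+t. indicator {0<..1} t * (\<integral>\<^sup>+u. H u t * ennreal (qd \<alpha> \<theta>1 \<theta>2 t u + qd \<alpha> \<theta>2 \<theta>1 t u) \<partial>lborel) \<partial>lborel)"
proof -
  define g where "g x y = ennreal (gamma_dens \<alpha> \<theta>1 x) * ennreal (gamma_dens \<alpha> \<theta>2 y) * H (Uf \<theta>1 \<theta>2 x y) (Tf x y)" for x y
  have gm[measurable]: "case_prod g \<in> borel_measurable (lborel \<Otimes>\<^sub>M lborel)"
    unfolding g_def by measurable
  have m1[measurable]: "(\<lambda>(x, y). if y \<le> x then g x y else 0) \<in> borel_measurable (lborel \<Otimes>\<^sub>M lborel)"
    by measurable
  have m2[measurable]: "(\<lambda>(x, y). if x < y then g x y else 0) \<in> borel_measurable (lborel \<Otimes>\<^sub>M lborel)"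
    by measurable
  have "(\<integral>\<^sup>+z. (\<lambda>(x, y). ennreal (gamma_dens \<alpha> \<theta>1 x) * ennreal (gamma_dens \<alpha> \<theta>2 y)) z * H (case_prod (Uf \<theta>1 \<theta>2) z) (case_prod Tf z) \<partial>(lborel \<Otimes>\<^sub>M lborel))
     = (\<integral>\<^sup>+z. (\<lambda>(x, y). (if y \<le> x then g x y else 0)) z + (\<lambda>(x, y). (if x < y then g x y else 0)) z \<partial>(lborel \<Otimes>\<^sub>M lborel))"
    by (intro nn_integral_cong) (auto simp: g_def indicator_def)
  also have "\<dots> = (\<integral>\<^sup>+z. (\<lambda>(x, y). (if y \<le> x then g x y else 0)) z \<partial>(lborel \<Otimes>\<^sub>M lborel))
      + (\<integral>\<^sup>+z. (\<lambda>(x, y). (if x < y then g x y else 0)) z \<partial>(lborel \<Otimes>\<^sub>M lborel))"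
    by (rule nn_integral_add) measurable
  also have "(\<integral>\<^sup>+z. (\<lambda>(x, y). (if y \<le> x then g x y else 0)) z \<partial>(lborel \<Otimes>\<^sub>M lborel))
      = (\<integral>\<^sup>+x. \<integral>\<^sup>+y. (if y \<le> x then g x y else 0) \<partial>lborel \<partial>lborel)"
    using lborel.nn_integral_fst[OF m1] by simp
  also have "\<dots> = (\<integral>\<^sup>+x. \<integral>\<^sup>+y. ennreal (gamma_dens \<alpha> \<theta>1 x) * ennreal (gamma_dens \<alpha> \<theta>2 y) * indicator {..1} (y / x) * H (ln x - ln \<theta>1) (y / x) \<partial>lborel \<partial>lborel)"
  proof (intro nn_integral_cong)
    fix x y :: real
    show "(if y \<le> x then g x y else 0) = ennreal (gamma_dens \<alpha> \<theta>1 x) * ennreal (gamma_dens \<alpha> \<theta>2 y) * indicator {..1} (y / x) * H (ln x - ln \<theta>1) (y / x)"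
    proof (cases "x > 0 \<and> y > 0")
      case True
      then show ?thesis by (auto simp: g_def Uf_def Tf_def indicator_def max_def min_def)
    next
      case False
      then show ?thesis by (auto simp: g_def gamma_dens_def)
    qed
  qed
  also have "\<dots> = (\<integral>\<^sup>+t. indicator {..1} t * indicator {0<..} t * (\<integral>\<^sup>+u. H u t * ennreal (qd \<alpha> \<theta>1 \<theta>2 t u) \<partial>lborel) \<partial>lborel)"
    by (rule region[OF \<alpha> a b]) auto
  also have "(\<integral>\<^sup>+z. (\<lambda>(x, y). (if x < y then g x y else 0)) z \<partial>(lborel \<Otimes>\<^sub>M lborel))
      = (\<integral>\<^sup>+y. \<integral>\<^sup>+x. (if x < y then g x y else 0) \<partial>lborel \<partial>lborel)"
    using lborel_pair.nn_integral_snd[OF m2] by simp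
  also have "\<dots> = (\<integral>\<^sup>+y. \<integral>\<^sup>+x. ennreal (gamma_dens \<alpha> \<theta>2 y) * ennreal (gamma_dens \<alpha> \<theta>1 x) * indicator {..<1} (x / y) * H (ln y - ln \<theta>2) (x / y) \<partial>lborel \<partial>lborel)"
  proof (intro nn_integral_cong)
    fix x y :: real
    show "(if x < y then g x y else 0) = ennreal (gamma_dens \<alpha> \<theta>2 y) * ennreal (gamma_dens \<alpha> \<theta>1 x) * indicator {..<1} (x / y) * H (ln y - ln \<theta>2) (x / y)"
    proof (cases "x > 0 \<and> y > 0")
      case True
      then show ?thesis by (auto simp: g_def Uf_def Tf_def indicator_def max_def min_def mult_ac)
    next
      case False
      then show ?thesis by (auto simp: g_def gamma_dens_def)
    qed
  qed
  also have "\<dots> = (\<integral>\<^sup>+t. indicator {..<1} t * indicator {0<..} t * (\<integral>\<^sup>+u. H u t * ennreal (qd \<alpha> \<theta>2 \<theta>1 t u) \<partial>lborel) \<partial>lborel)"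
    by (rule region[OF \<alpha> b a]) auto
  also have "\<dots> = (\<integral>\<^sup>+t. indicator {0<..1} t * (\<integral>\<^sup>+u. H u t * ennreal (qd \<alpha> \<theta>2 \<theta>1 t u) \<partial>lborel) \<partial>lborel)"
    by (intro nn_integral_cong_AE) (use AE_lborel_singleton[of 1] in \<open>eventually_elim, auto simp: indicator_def\<close>)
  also have "(\<integral>\<^sup>+t. indicator {..1} t * indicator {0<..} t * (\<integral>\<^sup>+u. H u t * ennreal (qd \<alpha> \<theta>1 \<theta>2 t u) \<partial>lborel) \<partial>lborel)
     = (\<integral>\<^sup>+t. indicator {0<..1} t * (\<integral>\<^sup>+u. H u t * ennreal (qd \<alpha> \<theta>1 \<theta>2 t u) \<partial>lborel) \<partial>lborel)"
    by (intro nn_integral_cong) (auto simp: indicator_def)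
  also have "(\<integral>\<^sup>+t. indicator {0<..1} t * (\<integral>\<^sup>+u. H u t * ennreal (qd \<alpha> \<theta>1 \<theta>2 t u) \<partial>lborel) \<partial>lborel)
      + (\<integral>\<^sup>+t. indicator {0<..1} t * (\<integral>\<^sup>+u. H u t * ennreal (qd \<alpha> \<theta>2 \<theta>1 t u) \<partial>lborel) \<partial>lborel)
     = (\<integral>\<^sup>+t. indicator {0<..1} t * (\<integral>\<^sup>+u. H u t * ennreal (qd \<alpha> \<theta>1 \<theta>2 t u) \<partial>lborel)
         + indicator {0<..1} t * (\<integral>\<^sup>+u. H u t * ennreal (qd \<alpha> \<theta>2 \<theta>1 t u) \<partial>lborel) \<partial>lborel)"
    by (rule nn_integral_add[symmetric]) measurable
  also have "\<dots> = (\<integral>\<^sup>+t. indicator {0<..1} t * (\<integral>\<^sup>+u. H u t * ennreal (qd \<alpha> \<theta>1 \<theta>2 t u + qd \<alpha> \<theta>2 \<theta>1 t u) \<partial>lborel) \<partial>lborel)"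
  proof (intro nn_integral_cong)
    fix t :: real
    show "indicator {0<..1} t * (\<integral>\<^sup>+u. H u t * ennreal (qd \<alpha> \<theta>1 \<theta>2 t u) \<partial>lborel)
         + indicator {0<..1} t * (\<integral>\<^sup>+u. H u t * ennreal (qd \<alpha> \<theta>2 \<theta>1 t u) \<partial>lborel)
       = indicator {0<..1} t * (\<integral>\<^sup>+u. H u t * ennreal (qd \<alpha> \<theta>1 \<theta>2 t u + qd \<alpha> \<theta>2 \<theta>1 t u) \<partial>lborel)"
    proof (cases "t \<in> {0<..1}")
      case True
      then have t: "t > 0" by simp
      have "(\<integral>\<^sup>+u. H u t * ennreal (qd \<alpha> \<theta>1 \<theta>2 t u + qd \<alpha> \<theta>2 \<theta>1 t u) \<partial>lborel)
          = (\<integral>\<^sup>+u. H u t * ennreal (qd \<alpha> \<theta>1 \<theta>2 t u) + H u t * ennreal (qd \<alpha> \<theta>2 \<theta>1 t u) \<partial>lborel)"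
        using qd_nonneg[OF t a b] qd_nonneg[OF t b a]
        by (intro nn_integral_cong) (simp add: ennreal_plus distrib_left)
      also have "\<dots> = (\<integral>\<^sup>+u. H u t * ennreal (qd \<alpha> \<theta>1 \<theta>2 t u) \<partial>lborel) + (\<integral>\<^sup>+u. H u t * ennreal (qd \<alpha> \<theta>2 \<theta>1 t u) \<partial>lborel)"
        by (rule nn_integral_add) measurable
      finally show ?thesis using True by (simp add: distrib_left)
    next
      case False
      then show ?thesis by simp
    qed
  qed
  finally show ?thesis .
qed

definition Dn :: "real \<Rightarrow> real \<Rightarrow> real \<Rightarrow> real" where
  "Dn \<alpha> \<mu> t = Gamma (2 * \<alpha>) *
        (1 / (\<mu> powr \<alpha> * (1 + t / \<mu>) powr (2 * \<alpha>)) + \<mu> powr \<alpha> / (1 + t * \<mu>) powr (2 * \<alpha>))"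

lemma Dn_pos: "\<alpha> > 0 \<Longrightarrow> \<mu> > 0 \<Longrightarrow> t > 0 \<Longrightarrow> Dn \<alpha> \<mu> t > 0"
  using add_pos_pos[of 1 "t / \<mu>"] add_pos_pos[of 1 "t * \<mu>"]
  unfolding Dn_def by (intro mult_pos_pos add_pos_pos divide_pos_pos) (auto simp: Gamma_real_pos intro!: add_pos_pos)

lemma qsum:
  fixes \<alpha> \<theta>1 \<theta>2 t u :: real
  assumes \<alpha>: "\<alpha> > 0" and a: "\<theta>1 > 0" and b: "\<theta>2 > 0" and t: "t > 0"
  defines "\<mu> \<equiv> max \<theta>1 \<theta>2 / min \<theta>1 \<theta>2"
  shows "qd \<alpha> \<theta>1 \<theta>2 t u + qd \<alpha> \<theta>2 \<theta>1 t u = (t powr (\<alpha> - 1) / (Gamma \<alpha>)\<^sup>2 * Dn \<alpha> \<mu> t) * cond_dens \<alpha> \<mu> t u"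
proof -
  have m: "\<mu> > 0" using a b by (simp add: \<mu>_def)
  define N where "N = \<mu> powr (-\<alpha>) * exp (2 * \<alpha> * u) * exp (- (1 + t / \<mu>) * exp u)
      + \<mu> powr \<alpha> * exp (2 * \<alpha> * u) * exp (- (1 + t * \<mu>) * exp u)"
  have cd: "cond_dens \<alpha> \<mu> t u = N / Dn \<alpha> \<mu> t"
    unfolding cond_dens_def N_def Dn_def by simp
  have inv: "(y / x) powr \<alpha> = (x / y) powr (- \<alpha>)" if "x > 0" "y > 0" for x y :: real
    using that by (simp add: powr_minus powr_divide)
  have qN: "qd \<alpha> \<theta>1 \<theta>2 t u + qd \<alpha> \<theta>2 \<theta>1 t u = t powr (\<alpha> - 1) / (Gamma \<alpha>)\<^sup>2 * N"
  proof (cases "\<theta>2 \<le> \<theta>1")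
    case True
    then have mu: "\<mu> = \<theta>1 / \<theta>2" by (simp add: \<mu>_def max_def min_def)
    have e1: "t * \<theta>1 / \<theta>2 = t * \<mu>" and e2: "t * \<theta>2 / \<theta>1 = t / \<mu>" using a b by (simp_all add: mu)
    show ?thesis unfolding qd_def N_def e1 e2 inv[OF a b] mu by (simp add: algebra_simps)
  next
    case False
    then have mu: "\<mu> = \<theta>2 / \<theta>1" by (simp add: \<mu>_def max_def min_def)
    have e1: "t * \<theta>1 / \<theta>2 = t / \<mu>" and e2: "t * \<theta>2 / \<theta>1 = t * \<mu>" using a b by (simp_all add: mu)
    show ?thesis unfolding qd_def N_def e1 e2 inv[OF b a] mu by (simp add: algebra_simps)
  qed
  show ?thesis unfolding qN cd using Dn_pos[OF \<alpha> m t] by simp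
qed

lemma cond_dens_measurable[measurable]: "(\<lambda>(t, u). cond_dens \<alpha> \<mu> t u) \<in> borel_measurable (borel \<Otimes>\<^sub>M borel)"
  unfolding cond_dens_def by measurable

lemma indep_lborel:
  assumes P: "prob_space M" and "prob_space.indep_var M borel X1 borel X2"
  shows "prob_space.indep_var M lborel X1 lborel X2"
proof -
  have "prob_space.indep_var M lborel (id \<circ> X1) lborel (id \<circ> X2)"
    using prob_space.indep_var_compose[OF P assms(2), of id lborel id lborel] by simp
  then show ?thesis by simp
qed

theorem lemma2p3:
  fixes M :: "'a measure" and X1 X2 :: "'a \<Rightarrow> real"
    and \<alpha> \<theta>1 \<theta>2 :: real
  assumes "prob_space M"
    and "\<alpha> > 0" and "\<theta>1 > 0" and "\<theta>2 > 0"
    and "prob_space.indep_var M borel X1 borel X2"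
    and "distributed M lborel X1 (\<lambda>x. ennreal (gamma_dens \<alpha> \<theta>1 x))"
    and "distributed M lborel X2 (\<lambda>x. ennreal (gamma_dens \<alpha> \<theta>2 x))"
  defines "U \<equiv> (\<lambda>\<omega>. ln (max (X1 \<omega>) (X2 \<omega>))
                 - (if X1 \<omega> \<ge> X2 \<omega> then ln \<theta>1 else ln \<theta>2))"
    and "T \<equiv> (\<lambda>\<omega>. min (X1 \<omega>) (X2 \<omega>) / max (X1 \<omega>) (X2 \<omega>))"
    and "\<mu> \<equiv> max \<theta>1 \<theta>2 / min \<theta>1 \<theta>2"
  shows "(\<forall>t\<in>{0<..1}. (\<forall>u. cond_dens \<alpha> \<mu> t u \<ge> 0)
            \<and> (\<integral>\<^sup>+ u. ennreal (cond_dens \<alpha> \<mu> t u) \<partial>lborel) = 1)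
       \<and> (\<forall>A \<in> sets borel. \<forall>B \<in> sets borel.
            emeasure M {\<omega> \<in> space M. U \<omega> \<in> A \<and> T \<omega> \<in> B}
            = (\<integral>\<^sup>+ t. indicator B t *
                   (\<integral>\<^sup>+ u. indicator A u * ennreal (cond_dens \<alpha> \<mu> t u) \<partial>lborel)
                 \<partial>(distr M borel T)))"
proof -
  interpret P: prob_space M by fact
  note a = assms(2) and t1 = assms(3) and t2 = assms(4)
  have X1m[measurable]: "X1 \<in> borel_measurable M" using distributed_measurable[OF assms(6)] by simp
  have X2m[measurable]: "X2 \<in> borel_measurable M" using distributed_measurable[OF assms(7)] by simp
  have J: "distributed M (lborel \<Otimes>\<^sub>M lborel) (\<lambda>\<omega>. (X1 \<omega>, X2 \<omega>))
       (\<lambda>(x, y). ennreal (gamma_dens \<alpha> \<theta>1 x) * ennreal (gamma_dens \<alpha> \<theta>2 y))"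
    by (rule P.distributed_joint_indep[OF _ _ assms(6) assms(7) indep_lborel[OF assms(1) assms(5)]])
       (simp_all add: lborel.sigma_finite_measure_axioms)
  have Ueq: "U = (\<lambda>\<omega>. Uf \<theta>1 \<theta>2 (X1 \<omega>) (X2 \<omega>))" unfolding U_def Uf_def by simp
  have Teq: "T = (\<lambda>\<omega>. Tf (X1 \<omega>) (X2 \<omega>))" unfolding T_def Tf_def by simp
  have Um[measurable]: "U \<in> borel_measurable M" unfolding Ueq by measurable
  have Tm[measurable]: "T \<in> borel_measurable M" unfolding Teq by measurable
  have m: "\<mu> > 0" using t1 t2 by (simp add: \<mu>_def)
  have part1: "\<forall>t\<in>{0<..1}. (\<forall>u. cond_dens \<alpha> \<mu> t u \<ge> 0)
            \<and> (\<integral>\<^sup>+ u. ennreal (cond_dens \<alpha> \<mu> t u) \<partial>lborel) = 1"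
    using cond_dens_part1[OF a m] by auto
  define Cc where "Cc t = t powr (\<alpha> - 1) / (Gamma \<alpha>)\<^sup>2 * Dn \<alpha> \<mu> t" for t
  have Cc: "Cc t \<ge> 0" if "t > 0" for t
    unfolding Cc_def using Dn_pos[OF a m that] by simp
  have qs: "qd \<alpha> \<theta>1 \<theta>2 t u + qd \<alpha> \<theta>2 \<theta>1 t u = Cc t * cond_dens \<alpha> \<mu> t u" if "t > 0" for t u
    unfolding Cc_def \<mu>_def by (rule qsum[OF a t1 t2 that])
  have gen: "(\<integral>\<^sup>+\<omega>. H (U \<omega>) (T \<omega>) \<partial>M)
     = (\<integral>\<^sup>+t. indicator {0<..1} t * (\<integral>\<^sup>+u. H u t * ennreal (Cc t) * ennreal (cond_dens \<alpha> \<mu> t u) \<partial>lborel) \<partial>lborel)"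
    if Hm[measurable]: "case_prod H \<in> borel_measurable (borel \<Otimes>\<^sub>M borel)" for H
  proof -
    have "(\<integral>\<^sup>+\<omega>. H (U \<omega>) (T \<omega>) \<partial>M)
       = (\<integral>\<^sup>+z. (\<lambda>(x, y). ennreal (gamma_dens \<alpha> \<theta>1 x) * ennreal (gamma_dens \<alpha> \<theta>2 y)) z * H (case_prod (Uf \<theta>1 \<theta>2) z) (case_prod Tf z) \<partial>(lborel \<Otimes>\<^sub>M lborel))"
    proof -
      have "(\<lambda>z. H (case_prod (Uf \<theta>1 \<theta>2) z) (case_prod Tf z)) \<in> borel_measurable (borel \<Otimes>\<^sub>M borel)"
        by (rule measurable_Pair_compose_split[OF Hm]) (rule Uf_measurable, rule Tf_measurable)
      moreover have "sets (lborel \<Otimes>\<^sub>M lborel) = sets (borel \<Otimes>\<^sub>M (borel :: real measure))"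
        by (intro sets_pair_measure_cong) simp_all
      ultimately have M: "(\<lambda>z. H (case_prod (Uf \<theta>1 \<theta>2) z) (case_prod Tf z)) \<in> borel_measurable (lborel \<Otimes>\<^sub>M lborel)"
        using measurable_cong_sets by blast
      show ?thesis unfolding Ueq Teq by (subst distributed_nn_integral[OF J M]) simp
    qed
    also have "\<dots> = (\<integral>\<^sup>+t. indicator {0<..1} t * (\<integral>\<^sup>+u. H u t * ennreal (qd \<alpha> \<theta>1 \<theta>2 t u + qd \<alpha> \<theta>2 \<theta>1 t u) \<partial>lborel) \<partial>lborel)"
      by (rule total[OF a t1 t2 Hm])
    also have "\<dots> = (\<integral>\<^sup>+t. indicator {0<..1} t * (\<integral>\<^sup>+u. H u t * ennreal (Cc t) * ennreal (cond_dens \<alpha> \<mu> t u) \<partial>lborel) \<partial>lborel)"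
    proof (intro nn_integral_cong)
      fix t :: real
      show "indicator {0<..1} t * (\<integral>\<^sup>+u. H u t * ennreal (qd \<alpha> \<theta>1 \<theta>2 t u + qd \<alpha> \<theta>2 \<theta>1 t u) \<partial>lborel)
          = indicator {0<..1} t * (\<integral>\<^sup>+u. H u t * ennreal (Cc t) * ennreal (cond_dens \<alpha> \<mu> t u) \<partial>lborel)"
      proof (cases "t \<in> {0<..1}")
        case True
        then have t: "t > 0" by simp
        have "(\<integral>\<^sup>+u. H u t * ennreal (qd \<alpha> \<theta>1 \<theta>2 t u + qd \<alpha> \<theta>2 \<theta>1 t u) \<partial>lborel)
            = (\<integral>\<^sup>+u. H u t * ennreal (Cc t) * ennreal (cond_dens \<alpha> \<mu> t u) \<partial>lborel)"
          using Cc[OF t] cond_dens_part1[OF a m t]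
          by (intro nn_integral_cong) (simp add: qs[OF t] ennreal_mult mult.assoc)
        then show ?thesis by simp
      qed simp
    qed
    finally show ?thesis .
  qed
  have part2: "emeasure M {\<omega> \<in> space M. U \<omega> \<in> A \<and> T \<omega> \<in> B}
            = (\<integral>\<^sup>+ t. indicator B t *
                   (\<integral>\<^sup>+ u. indicator A u * ennreal (cond_dens \<alpha> \<mu> t u) \<partial>lborel)
                 \<partial>(distr M borel T))"
    if A[measurable]: "A \<in> sets borel" and B[measurable]: "B \<in> sets borel" for A B
  proof -
    define K where "K t = (\<integral>\<^sup>+ u. indicator A u * ennreal (cond_dens \<alpha> \<mu> t u) \<partial>lborel)" for t
    have [measurable]: "A \<in> sets borel" "B \<in> sets borel" using A B by auto
    have "(\<lambda>(t, u). indicator A u * ennreal (cond_dens \<alpha> \<mu> t u)) \<in> borel_measurable (borel \<Otimes>\<^sub>M borel)"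
      using cond_dens_measurable[of \<alpha> \<mu>] by measurable
    moreover have "sets (borel \<Otimes>\<^sub>M lborel) = sets (borel \<Otimes>\<^sub>M (borel :: real measure))"
      by (intro sets_pair_measure_cong) simp_all
    ultimately have "(\<lambda>(t, u). indicator A u * ennreal (cond_dens \<alpha> \<mu> t u)) \<in> borel_measurable (borel \<Otimes>\<^sub>M lborel)"
      using measurable_cong_sets by blast
    note lborel.borel_measurable_nn_integral[OF this]
    then have Km[measurable]: "K \<in> borel_measurable borel" unfolding K_def[abs_def] .
    have "emeasure M {\<omega> \<in> space M. U \<omega> \<in> A \<and> T \<omega> \<in> B} = (\<integral>\<^sup>+\<omega>. indicator A (U \<omega>) * indicator B (T \<omega>) \<partial>M)"
    proof -
      have S: "{\<omega> \<in> space M. U \<omega> \<in> A \<and> T \<omega> \<in> B} \<in> sets M" by measurable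
      show ?thesis unfolding nn_integral_indicator[OF S, symmetric]
        by (intro nn_integral_cong) (auto split: split_indicator)
    qed
    also have "\<dots> = (\<integral>\<^sup>+t. indicator {0<..1} t * (\<integral>\<^sup>+u. indicator A u * indicator B t * ennreal (Cc t) * ennreal (cond_dens \<alpha> \<mu> t u) \<partial>lborel) \<partial>lborel)"
      by (rule gen[of "\<lambda>u t. indicator A u * indicator B t"]) measurable
    also have "\<dots> = (\<integral>\<^sup>+t. indicator {0<..1} t * (indicator B t * ennreal (Cc t) * K t) \<partial>lborel)"
      unfolding K_def
      by (intro nn_integral_cong) (subst nn_integral_cmult[symmetric], measurable, simp add: mult_ac)
    also have "\<dots> = (\<integral>\<^sup>+t. indicator {0<..1} t * (\<integral>\<^sup>+u. indicator B t * K t * ennreal (Cc t) * ennreal (cond_dens \<alpha> \<mu> t u) \<partial>lborel) \<partial>lborel)"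
    proof (intro nn_integral_cong)
      fix t :: real
      show "indicator {0<..1} t * (indicator B t * ennreal (Cc t) * K t) = indicator {0<..1} t * (\<integral>\<^sup>+u. indicator B t * K t * ennreal (Cc t) * ennreal (cond_dens \<alpha> \<mu> t u) \<partial>lborel)"
      proof (cases "t \<in> {0<..1}")
        case True
        then have t: "t > 0" by simp
        have "(\<integral>\<^sup>+u. indicator B t * K t * ennreal (Cc t) * ennreal (cond_dens \<alpha> \<mu> t u) \<partial>lborel)
           = indicator B t * K t * ennreal (Cc t) * (\<integral>\<^sup>+u. ennreal (cond_dens \<alpha> \<mu> t u) \<partial>lborel)"
          by (rule nn_integral_cmult) measurable
        also have "\<dots> = indicator B t * K t * ennreal (Cc t)"
          using cond_dens_part1[OF a m t] by simp
        finally show ?thesis by (simp add: mult_ac)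
      qed simp
    qed
    also have "\<dots> = (\<integral>\<^sup>+\<omega>. indicator B (T \<omega>) * K (T \<omega>) \<partial>M)"
      by (rule gen[of "\<lambda>u t. indicator B t * K t", symmetric]) measurable
    also have "\<dots> = (\<integral>\<^sup>+ t. indicator B t * K t \<partial>(distr M borel T))"
      by (rule nn_integral_distr[symmetric]) measurable
    finally show ?thesis unfolding K_def .
  qed
  show ?thesis using part1 part2 by blast
qed

end
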